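(* Let $n\ge2$ and let $\mathrm S=\mathrm S_1\cup\mathrm S_2\cup\mathrm S_3$ with $\mathrm S_1\subseteq\{B_{ij}:1\le i<j\le n\}$, $\mathrm S_2\subseteq\{C_{ij}:1\le i<j\le n\}$, $\mathrm S_3\subseteq\{D_{ij}:1\le i<j\le n\}$, and let $\mathscr G_{\mathrm S}$ be its associated edge-colored multigraph. Then the real Lie algebra generated by $\mathrm S$ equals $\mathfrak{su}(n)$ if and only if one of the following holds: (i) $\mathscr G_{\mathrm S}$ has edges of at least two colors, and the Blue edges together with the node set $\{1,\dots,n\}$ form a connected graph; (ii) $\mathscr G_{\mathrm S}$ is connected and has a self-loop; (iii) $\mathscr G_{\mathrm S}$ is connected and has a cycle containing an odd number of Red edges.
   Context: $E_{ij}$ is the $n\times n$ matrix unit; $B_{ij}=E_{ij}-E_{ji}$, $C_{ij}=\mathrm i(E_{ij}+E_{ji})$, $D_{ij}=\mathrm i(E_{ii}-E_{jj})$; $\mathfrak{su}(n)$ is the real Lie algebra of traceless skew-Hermitian $n\times n$ matrices with bracket $[X,Y]=XY-YX$. The edge-colored multigraph $\mathscr G_{\mathrm S}$ has node set $\{1,\dots,n\}$, a Blue edge $\{i,j\}$ for each $B_{ij}\in\mathrm S_1$, a Red edge $\{i,j\}$ for each $C_{ij}\in\mathrm S_2$, and Green self-loops $\{i,i\}$ and $\{j,j\}$ for each $D_{ij}\in\mathrm S_3$; edges with same endpoints but different colors are distinct. A walk alternates nodes and edges with consecutive endpoints; a cycle is a closed walk; connected means any two nodes are joined by a walk. *)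

theory Defs
  imports Main "HOL-Library.Complex_Order" Complex_Main
begin

text \<open>n x n complex matrices are represented as functions nat => nat => complex,
  with row/column indices in {1..n}; entries outside {1..n} x {1..n} are zero.\<close>

type_synonym cmat = "nat \<Rightarrow> nat \<Rightarrow> complex"

definition Emat :: "nat \<Rightarrow> nat \<Rightarrow> cmat" where
  "Emat i j = (\<lambda>a b. if a = i \<and> b = j then 1 else 0)"

definition Bmat :: "nat \<Rightarrow> nat \<Rightarrow> cmat" where
  "Bmat i j = (\<lambda>a b. Emat i j a b - Emat j i a b)"

definition Cmat :: "nat \<Rightarrow> nat \<Rightarrow> cmat" where
  "Cmat i j = (\<lambda>a b. \<i> * (Emat i j a b + Emat j i a b))"

definition Dmat :: "nat \<Rightarrow> nat \<Rightarrow> cmat" where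
  "Dmat i j = (\<lambda>a b. \<i> * (Emat i i a b - Emat j j a b))"

definition matmul :: "nat \<Rightarrow> cmat \<Rightarrow> cmat \<Rightarrow> cmat" where
  "matmul n X Y = (\<lambda>a b. \<Sum>k\<in>{1..n}. X a k * Y k b)"

definition lie_bracket :: "nat \<Rightarrow> cmat \<Rightarrow> cmat \<Rightarrow> cmat" where
  "lie_bracket n X Y = (\<lambda>a b. matmul n X Y a b - matmul n Y X a b)"

definition su :: "nat \<Rightarrow> cmat set" where
  "su n = {X. (\<forall>a b. (a \<notin> {1..n} \<or> b \<notin> {1..n}) \<longrightarrow> X a b = 0)
             \<and> (\<forall>a b. X b a = - cnj (X a b))
             \<and> (\<Sum>a\<in>{1..n}. X a a) = 0}"

inductive_set lie_gen :: "nat \<Rightarrow> cmat set \<Rightarrow> cmat set" for n S where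
  base: "X \<in> S \<Longrightarrow> X \<in> lie_gen n S"
| zero: "(\<lambda>a b. 0) \<in> lie_gen n S"
| add: "X \<in> lie_gen n S \<Longrightarrow> Y \<in> lie_gen n S \<Longrightarrow> (\<lambda>a b. X a b + Y a b) \<in> lie_gen n S"
| smult: "X \<in> lie_gen n S \<Longrightarrow> (\<lambda>a b. complex_of_real r * X a b) \<in> lie_gen n S"
| brk: "X \<in> lie_gen n S \<Longrightarrow> Y \<in> lie_gen n S \<Longrightarrow> lie_bracket n X Y \<in> lie_gen n S"

text \<open>Edge-colored multigraph G_S. S_1 = Bmat ` P1, S_2 = Cmat ` P2, S_3 = Dmat ` P3,
  where P1, P2, P3 are sets of index pairs (i,j) with 1 <= i < j <= n.\<close>
datatype color = Blue | Red | Green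

definition has_edge ::
  "(nat \<times> nat) set \<Rightarrow> (nat \<times> nat) set \<Rightarrow> (nat \<times> nat) set \<Rightarrow> color \<Rightarrow> nat \<Rightarrow> nat \<Rightarrow> bool" where
  "has_edge P1 P2 P3 c u v =
     (case c of
        Blue \<Rightarrow> (u, v) \<in> P1 \<or> (v, u) \<in> P1
      | Red \<Rightarrow> (u, v) \<in> P2 \<or> (v, u) \<in> P2
      | Green \<Rightarrow> u = v \<and> (\<exists>(i, j)\<in>P3. u = i \<or> u = j))"

definition adj :: "(nat \<times> nat) set \<Rightarrow> (nat \<times> nat) set \<Rightarrow> (nat \<times> nat) set \<Rightarrow> nat \<Rightarrow> nat \<Rightarrow> bool" where
  "adj P1 P2 P3 u v = (\<exists>c. has_edge P1 P2 P3 c u v)"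

definition graph_connected :: "nat \<Rightarrow> (nat \<times> nat) set \<Rightarrow> (nat \<times> nat) set \<Rightarrow> (nat \<times> nat) set \<Rightarrow> bool" where
  "graph_connected n P1 P2 P3 = (\<forall>u\<in>{1..n}. \<forall>v\<in>{1..n}. (adj P1 P2 P3)\<^sup>*\<^sup>* u v)"

definition blue_connected :: "nat \<Rightarrow> (nat \<times> nat) set \<Rightarrow> bool" where
  "blue_connected n P1 = (\<forall>u\<in>{1..n}. \<forall>v\<in>{1..n}. (has_edge P1 {} {} Blue)\<^sup>*\<^sup>* u v)"

definition color_used :: "(nat \<times> nat) set \<Rightarrow> (nat \<times> nat) set \<Rightarrow> (nat \<times> nat) set \<Rightarrow> color \<Rightarrow> bool" where
  "color_used P1 P2 P3 c = (\<exists>u v. has_edge P1 P2 P3 c u v)"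

definition has_self_loop :: "(nat \<times> nat) set \<Rightarrow> (nat \<times> nat) set \<Rightarrow> (nat \<times> nat) set \<Rightarrow> bool" where
  "has_self_loop P1 P2 P3 = (\<exists>c u. has_edge P1 P2 P3 c u u)"

definition closed_walk ::
  "(nat \<times> nat) set \<Rightarrow> (nat \<times> nat) set \<Rightarrow> (nat \<times> nat) set \<Rightarrow> (nat \<times> color \<times> nat) list \<Rightarrow> bool" where
  "closed_walk P1 P2 P3 w =
     (w \<noteq> [] \<and>
      (\<forall>s\<in>set w. case s of (u, c, v) \<Rightarrow> has_edge P1 P2 P3 c u v) \<and>
      (\<forall>k. Suc k < length w \<longrightarrow> snd (snd (w ! k)) = fst (w ! Suc k)) \<and>
      snd (snd (last w)) = fst (hd w))"

definition red_count :: "(nat \<times> color \<times> nat) list \<Rightarrow> nat" where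
  "red_count w = length (filter (\<lambda>s. fst (snd s) = Red) w)"

end

theory Submission
  imports Defs
begin


definition Fm :: "nat \<Rightarrow> nat \<Rightarrow> complex \<Rightarrow> cmat" where
  "Fm a b z = (\<lambda>x y. (if x = a \<and> y = b then z else 0) + (if x = b \<and> y = a then - cnj z else 0))"

lemma Bmat_Fm: "Bmat a b = Fm a b 1"
  by (auto simp: Bmat_def Fm_def Emat_def fun_eq_iff)
lemma Cmat_alt: "Cmat a b x y = \<i> * ((if x = a \<and> y = b then 1 else 0) + (if x = b \<and> y = a then 1 else 0))"
  unfolding Cmat_def Emat_def by simp
lemma Fm_i_alt: "Fm a b \<i> x y = (if x = a \<and> y = b then \<i> else 0) + (if x = b \<and> y = a then \<i> else 0)"
  unfolding Fm_def by simp
lemma i_if_distrib: "\<i> * ((if P then 1 else 0) + (if Q then 1 else 0)) = (if P then \<i> else 0) + (if Q then \<i> else 0)"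
  by (simp add: distrib_left)
lemma Cmat_Fm: "Cmat a b = Fm a b \<i>"
  unfolding fun_eq_iff Cmat_alt Fm_i_alt i_if_distrib by simp
lemma Fm_swap: "Fm b a z = Fm a b (- cnj z)"
  by (auto simp: Fm_def fun_eq_iff)
lemma Fm_scale: "(\<lambda>x y. complex_of_real r * Fm a b z x y) = Fm a b (complex_of_real r * z)"
  unfolding fun_eq_iff Fm_def
  apply (intro allI)
  subgoal for x y by (cases "x = a"; cases "y = b"; cases "x = b"; cases "y = a") (simp_all add: algebra_simps)
  done
lemma Fm_comb: "Fm a b z = (\<lambda>x y. complex_of_real (Re z) * Fm a b 1 x y + complex_of_real (Im z) * Fm a b \<i> x y)"
  unfolding fun_eq_iff Fm_def
  apply (intro allI)
  subgoal for x y by (cases "x = a"; cases "y = b"; cases "x = b"; cases "y = a") (simp_all add: complex_eq_iff)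
  done

lemma if0_mult: "(if P then c else 0) * (t::complex) = (if P then c * t else 0)"
  "t * (if P then c else 0) = (if P then t * c else 0)" by auto

lemma Fm_alt: "Fm a b z x k = (if k = b then (if x = a then z else 0) else 0) + (if k = a then (if x = b then - cnj z else 0) else 0)"
  "Fm a b z k y = (if k = a then (if y = b then z else 0) else 0) + (if k = b then (if y = a then - cnj z else 0) else 0)"
  by (auto simp: Fm_def)
lemma D_alt: "Dmat a b x k = (if k = a then (if x = a then \<i> else 0) else 0) - (if k = b then (if x = b then \<i> else 0) else 0)"
  "Dmat a b k y = (if k = a then (if y = a then \<i> else 0) else 0) - (if k = b then (if y = b then \<i> else 0) else 0)"
  by (auto simp: Dmat_def Emat_def)

lemma matmul_Fm_left:
  assumes "b \<in> {1..n}" "a \<in> {1..n}" "a \<noteq> b"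
  shows "matmul n (Fm a b z) Y x y = (if x = a then z * Y b y else 0) + (if x = b then - cnj z * Y a y else 0)"
  using assms by (simp add: matmul_def Fm_alt(1) distrib_right sum.distrib if0_mult)

lemma matmul_Fm_right:
  assumes "b \<in> {1..n}" "a \<in> {1..n}" "a \<noteq> b"
  shows "matmul n Y (Fm a b z) x y = (if y = b then Y x a * z else 0) + (if y = a then Y x b * (- cnj z) else 0)"
  using assms by (simp add: matmul_def Fm_alt(2) distrib_left sum.distrib if0_mult)

lemma matmul_D_left:
  assumes "b \<in> {1..n}" "a \<in> {1..n}" "a \<noteq> b"
  shows "matmul n (Dmat a b) Y x y = (if x = a then \<i> * Y a y else 0) - (if x = b then \<i> * Y b y else 0)"
  using assms by (simp add: matmul_def D_alt(2) left_diff_distrib sum_subtractf if0_mult)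

lemma matmul_D_right:
  assumes "b \<in> {1..n}" "a \<in> {1..n}" "a \<noteq> b"
  shows "matmul n Y (Dmat a b) x y = (if y = a then Y x a * \<i> else 0) - (if y = b then Y x b * \<i> else 0)"
  using assms by (simp add: matmul_def D_alt(1) right_diff_distrib sum_subtractf if0_mult)



lemma br1:
  assumes "x \<in> {1..n}" "y \<in> {1..n}" "w \<in> {1..n}" "x \<noteq> y" "y \<noteq> w" "x \<noteq> w"
  shows "lie_bracket n (Fm x y z) (Fm y w u) = Fm x w (z * u)"
  unfolding lie_bracket_def fun_eq_iff
  using assms by (simp add: matmul_Fm_left matmul_Fm_right) (simp add: Fm_def)

lemma br2:
  assumes "a \<in> {1..n}" "b \<in> {1..n}" "a \<noteq> b"
  shows "lie_bracket n (Dmat a b) (Fm a b z) = Fm a b (2 * \<i> * z)"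
  unfolding lie_bracket_def fun_eq_iff
  using assms by (simp add: matmul_D_left matmul_Fm_left) (simp add: Fm_def Dmat_def Emat_def)

lemma br3:
  assumes "a \<in> {1..n}" "b \<in> {1..n}" "a \<noteq> b"
  shows "lie_bracket n (Fm a b 1) (Fm a b \<i>) = (\<lambda>x y. 2 * Dmat a b x y)"
  unfolding lie_bracket_def fun_eq_iff
  using assms by (simp add: matmul_Fm_left matmul_Fm_right) (simp add: Fm_def Dmat_def Emat_def)


lemma lg_Fm_scale: "Fm a b z \<in> lie_gen n S \<Longrightarrow> Fm a b (complex_of_real r * z) \<in> lie_gen n S"
  by (metis Fm_scale lie_gen.smult)

lemma lg_Fm_neg: "Fm a b z \<in> lie_gen n S \<Longrightarrow> Fm a b (- z) \<in> lie_gen n S"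
  using lg_Fm_scale[of a b z n S "-1"] by simp

lemma lg_Fm_full: "Fm a b 1 \<in> lie_gen n S \<Longrightarrow> Fm a b \<i> \<in> lie_gen n S \<Longrightarrow> Fm a b z \<in> lie_gen n S"
  by (subst Fm_comb) (intro lie_gen.add lie_gen.smult)

lemma lg_sum: "finite I \<Longrightarrow> (\<forall>i\<in>I. M i \<in> lie_gen n S) \<Longrightarrow> (\<lambda>a b. \<Sum>i\<in>I. M i a b) \<in> lie_gen n S"
proof (induction I rule: finite_induct)
  case empty
  then show ?case using lie_gen.zero by simp
next
  case (insert x F)
  then show ?case using lie_gen.add[of "M x" n S "\<lambda>a b. \<Sum>i\<in>F. M i a b"] by simp
qed

lemma Fm_su:
  assumes "a \<in> {1..n}" "b \<in> {1..n}" "a \<noteq> b"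
  shows "Fm a b z \<in> su n"
proof -
  have 1: "\<forall>x y. (x \<notin> {1..n} \<or> y \<notin> {1..n}) \<longrightarrow> Fm a b z x y = 0"
    using assms by (auto simp: Fm_def)
  have 2: "\<forall>x y. Fm a b z y x = - cnj (Fm a b z x y)"
  proof (intro allI)
    fix x y show "Fm a b z y x = - cnj (Fm a b z x y)"
      unfolding Fm_def by (cases "x = a"; cases "y = b"; cases "x = b"; cases "y = a") simp_all
  qed
  have 3: "(\<Sum>x\<in>{1..n}. Fm a b z x x) = 0"
    using assms by (intro sum.neutral) (auto simp: Fm_def)
  show ?thesis using 1 2 3 unfolding su_def by blast
qed

lemma Dmat_su: "a \<in> {1..n} \<Longrightarrow> b \<in> {1..n} \<Longrightarrow> a \<noteq> b \<Longrightarrow> Dmat a b \<in> su n"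
  unfolding su_def by (auto simp: Dmat_def Emat_def sum_subtractf sum_distrib_left[symmetric])

lemma su_add:
  assumes "X \<in> su n" "Y \<in> su n" shows "(\<lambda>a b. X a b + Y a b) \<in> su n"
proof -
  have X0: "\<And>a b. a \<notin> {1..n} \<or> b \<notin> {1..n} \<Longrightarrow> X a b = 0" and hX: "\<And>a b. X b a = - cnj (X a b)"
    and tX: "(\<Sum>a\<in>{1..n}. X a a) = 0"
    and Y0: "\<And>a b. a \<notin> {1..n} \<or> b \<notin> {1..n} \<Longrightarrow> Y a b = 0" and hY: "\<And>a b. Y b a = - cnj (Y a b)"
    and tY: "(\<Sum>a\<in>{1..n}. Y a a) = 0"
    using assms unfolding su_def by blast+
  have 1: "\<forall>a b. (a \<notin> {1..n} \<or> b \<notin> {1..n}) \<longrightarrow> X a b + Y a b = 0" using X0 Y0 by simp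
  have 2: "\<forall>a b. X b a + Y b a = - cnj (X a b + Y a b)"
  proof (intro allI)
    fix a b show "X b a + Y b a = - cnj (X a b + Y a b)" by (subst hX, subst hY) simp
  qed
  have 3: "(\<Sum>a\<in>{1..n}. X a a + Y a a) = 0" using tX tY by (simp add: sum.distrib)
  show ?thesis unfolding su_def using 1 2 3 by blast
qed

lemma su_smult:
  assumes "X \<in> su n" shows "(\<lambda>a b. complex_of_real r * X a b) \<in> su n"
proof -
  have X0: "\<And>a b. a \<notin> {1..n} \<or> b \<notin> {1..n} \<Longrightarrow> X a b = 0" and hX: "\<And>a b. X b a = - cnj (X a b)"
    and tX: "(\<Sum>a\<in>{1..n}. X a a) = 0"
    using assms unfolding su_def by blast+
  have 1: "\<forall>a b. (a \<notin> {1..n} \<or> b \<notin> {1..n}) \<longrightarrow> complex_of_real r * X a b = 0" using X0 by simp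
  have 2: "\<forall>a b. complex_of_real r * X b a = - cnj (complex_of_real r * X a b)"
  proof (intro allI)
    fix a b show "complex_of_real r * X b a = - cnj (complex_of_real r * X a b)" by (subst hX) simp
  qed
  have 3: "(\<Sum>a\<in>{1..n}. complex_of_real r * X a a) = 0" using tX by (simp add: sum_distrib_left[symmetric])
  show ?thesis unfolding su_def using 1 2 3 by blast
qed

lemma su_zero: "(\<lambda>a b. 0) \<in> su n"
  unfolding su_def by simp

lemma su_bracket:
  assumes X: "X \<in> su n" and Y: "Y \<in> su n"
  shows "lie_bracket n X Y \<in> su n"
proof -
  have X0: "\<And>a b. a \<notin> {1..n} \<or> b \<notin> {1..n} \<Longrightarrow> X a b = 0" and hX: "\<And>a b. X b a = - cnj (X a b)"
    and Y0: "\<And>a b. a \<notin> {1..n} \<or> b \<notin> {1..n} \<Longrightarrow> Y a b = 0" and hY: "\<And>a b. Y b a = - cnj (Y a b)"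
    using X Y unfolding su_def by blast+
  have 1: "\<forall>a b. (a \<notin> {1..n} \<or> b \<notin> {1..n}) \<longrightarrow> lie_bracket n X Y a b = 0"
    using X0 Y0 by (auto simp: lie_bracket_def matmul_def)
  have 2: "lie_bracket n X Y b a = - cnj (lie_bracket n X Y a b)" for a b
  proof -
    have f1: "X b k * Y k a = cnj (Y a k) * cnj (X k b)" for k
      by (simp add: hX[of k b] hY[of a k])
    have f2: "Y b k * X k a = cnj (X a k) * cnj (Y k b)" for k
      by (simp add: hX[of a k] hY[of k b])
    have e1: "(\<Sum>k\<in>{1..n}. X b k * Y k a) = (\<Sum>k\<in>{1..n}. cnj (Y a k) * cnj (X k b))"
      using f1 by simp
    have e2: "(\<Sum>k\<in>{1..n}. Y b k * X k a) = (\<Sum>k\<in>{1..n}. cnj (X a k) * cnj (Y k b))"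
      using f2 by simp
    show ?thesis unfolding lie_bracket_def matmul_def e1 e2
      by (simp add: cnj_sum)
  qed
  have 3: "(\<Sum>a\<in>{1..n}. lie_bracket n X Y a a) = 0"
    unfolding lie_bracket_def matmul_def sum_subtractf
    by (subst sum.swap) (simp add: mult.commute)
  show ?thesis using 1 2 3 unfolding su_def by blast
qed

lemma lg_su: "S \<subseteq> su n \<Longrightarrow> lie_gen n S \<subseteq> su n"
proof
  fix X assume S: "S \<subseteq> su n" and "X \<in> lie_gen n S"
  from this(2) show "X \<in> su n"
    by (induction rule: lie_gen.induct) (use S in \<open>auto intro: su_add su_smult su_zero su_bracket\<close>)
qed



definition Qp :: "nat \<Rightarrow> cmat set \<Rightarrow> nat \<Rightarrow> nat \<Rightarrow> bool" where
  "Qp n S x y = (Fm x y 1 \<in> lie_gen n S \<or> Fm x y \<i> \<in> lie_gen n S)"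
definition full :: "nat \<Rightarrow> cmat set \<Rightarrow> nat \<Rightarrow> nat \<Rightarrow> bool" where
  "full n S x y = (Fm x y 1 \<in> lie_gen n S \<and> Fm x y \<i> \<in> lie_gen n S)"

lemma Fm_swap1: "Fm y x 1 = Fm x y (-1)" and Fm_swapi: "Fm y x \<i> = Fm x y \<i>"
  by (simp_all add: Fm_swap[of y x])

lemma lg_Fm_neg1: "Fm a b (-1) \<in> lie_gen n S \<Longrightarrow> Fm a b 1 \<in> lie_gen n S"
  using lg_Fm_neg[of a b "-1"] by simp

lemma Qp_sym: "Qp n S x y \<Longrightarrow> Qp n S y x"
  unfolding Qp_def using lg_Fm_neg[of x y 1 n S] Fm_swap1[of y x] Fm_swapi[of y x] by auto

lemma full_sym: "full n S x y \<Longrightarrow> full n S y x"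
  unfolding full_def using lg_Fm_neg[of x y 1 n S] Fm_swap1[of y x] Fm_swapi[of y x] by auto

lemma brk_Fm:
  assumes "x \<in> {1..n}" "y \<in> {1..n}" "w \<in> {1..n}" "x \<noteq> y" "y \<noteq> w" "x \<noteq> w"
    and "Fm x y z \<in> lie_gen n S" "Fm y w u \<in> lie_gen n S"
  shows "Fm x w (z * u) \<in> lie_gen n S"
  using lie_gen.brk[OF assms(7,8)] br1[OF assms(1-6)] by simp

lemma Qp_trans:
  assumes "x \<in> {1..n}" "y \<in> {1..n}" "w \<in> {1..n}" "x \<noteq> y" "y \<noteq> w" "x \<noteq> w"
    and "Qp n S x y" "Qp n S y w"
  shows "Qp n S x w"
proof -
  note b = brk_Fm[OF assms(1-6)]
  have h1: "Fm x y 1 \<in> lie_gen n S \<or> Fm x y \<i> \<in> lie_gen n S" using assms(7) unfolding Qp_def .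
  have h2: "Fm y w 1 \<in> lie_gen n S \<or> Fm y w \<i> \<in> lie_gen n S" using assms(8) unfolding Qp_def .
  have "Fm x w 1 \<in> lie_gen n S \<or> Fm x w \<i> \<in> lie_gen n S"
  proof (cases "Fm x y 1 \<in> lie_gen n S")
    case a1: True
    show ?thesis
    proof (cases "Fm y w 1 \<in> lie_gen n S")
      case True then show ?thesis using b[OF a1 True] by simp
    next
      case False then show ?thesis using b[OF a1, of \<i>] h2 by simp
    qed
  next
    case a1: False
    then have a2: "Fm x y \<i> \<in> lie_gen n S" using h1 by blast
    show ?thesis
    proof (cases "Fm y w 1 \<in> lie_gen n S")
      case True then show ?thesis using b[OF a2 True] by simp
    next
      case False
      then have "Fm x w (-1) \<in> lie_gen n S" using b[OF a2, of \<i>] h2 by simp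
      then show ?thesis using lg_Fm_neg1 by blast
    qed
  qed
  then show ?thesis unfolding Qp_def .
qed

lemma full_A:
  assumes "u \<in> {1..n}" "v \<in> {1..n}" "w \<in> {1..n}" "u \<noteq> v" "v \<noteq> w" "u \<noteq> w"
    and "full n S u v" "Qp n S v w"
  shows "full n S u w"
proof -
  note b = brk_Fm[OF assms(1-6)]
  from assms(8) show ?thesis unfolding Qp_def
  proof (elim disjE)
    assume h: "Fm v w 1 \<in> lie_gen n S"
    show ?thesis using b[OF _ h] assms(7) unfolding full_def by force
  next
    assume h: "Fm v w \<i> \<in> lie_gen n S"
    have "Fm u w (-1) \<in> lie_gen n S" using b[OF _ h, of \<i>] assms(7) unfolding full_def by force
    then show ?thesis using b[OF _ h, of 1] assms(7) lg_Fm_neg1 unfolding full_def by force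
  qed
qed

lemma full_trans:
  assumes "u \<in> {1..n}" "v \<in> {1..n}" "w \<in> {1..n}" "u \<noteq> v" "v \<noteq> w" "u \<noteq> w"
    and "full n S u v" "full n S v w"
  shows "full n S u w"
  using full_A[OF assms(1-7)] assms(8) unfolding full_def Qp_def by blast

lemma star_lemma:
  fixes E R :: "nat \<Rightarrow> nat \<Rightarrow> bool" and V :: "nat set"
  assumes conn: "\<forall>x\<in>V. \<forall>y\<in>V. E\<^sup>*\<^sup>* x y"
    and clos: "\<And>x y. E x y \<Longrightarrow> x \<in> V \<Longrightarrow> y \<in> V"
    and edge: "\<And>x y. E x y \<Longrightarrow> x \<noteq> y \<Longrightarrow> x \<in> V \<Longrightarrow> y \<in> V \<Longrightarrow> R x y"
    and trans: "\<And>x y z. R x y \<Longrightarrow> R y z \<Longrightarrow> x \<in> V \<Longrightarrow> y \<in> V \<Longrightarrow> z \<in> V \<Longrightarrow> x \<noteq> y \<Longrightarrow> y \<noteq> z \<Longrightarrow> x \<noteq> z \<Longrightarrow> R x z"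
    and xV: "x \<in> V" and yV: "y \<in> V" and xy: "x \<noteq> y"
  shows "R x y"
proof -
  have "E\<^sup>*\<^sup>* x y" using conn xV yV by blast
  then have "y \<in> V \<and> (y = x \<or> R x y)"
  proof (induction rule: rtranclp_induct)
    case base
    then show ?case using xV by simp
  next
    case (step y w)
    have wV: "w \<in> V" using clos[OF step(2)] step(3) by blast
    show ?case
    proof (cases "w = x \<or> w = y")
      case True
      then show ?thesis using wV step(3) by auto
    next
      case False
      show ?thesis
      proof (cases "y = x")
        case True
        then show ?thesis using edge[OF step(2)] False wV step(3) by auto
      next
        case yx: False
        then have "R x y" using step(3) by blast
        then show ?thesis using trans[OF _ edge[OF step(2)]] False wV step(3) xV yx by auto
      qed
    qed
  qed
  then show ?thesis using xy by blast
qed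

definition Sgen :: "(nat \<times> nat) set \<Rightarrow> (nat \<times> nat) set \<Rightarrow> (nat \<times> nat) set \<Rightarrow> cmat set" where
  "Sgen P1 P2 P3 = (\<lambda>(i, j). Bmat i j) ` P1 \<union> (\<lambda>(i, j). Cmat i j) ` P2 \<union> (\<lambda>(i, j). Dmat i j) ` P3"

definition validP :: "nat \<Rightarrow> (nat \<times> nat) set \<Rightarrow> bool" where
  "validP n P = (P \<subseteq> {(i, j). 1 \<le> i \<and> i < j \<and> j \<le> n})"

lemma has_edge_range:
  assumes "validP n P1" "validP n P2" "validP n P3" "has_edge P1 P2 P3 c x y"
  shows "x \<in> {1..n} \<and> y \<in> {1..n}"
  using assms unfolding validP_def has_edge_def by (cases c) auto

lemma has_edge_sym: "has_edge P1 P2 P3 c x y = has_edge P1 P2 P3 c y x"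
  unfolding has_edge_def by (cases c) auto

lemma has_edge_ne:
  assumes "validP n P1" "validP n P2" "has_edge P1 P2 P3 c x y" "c \<noteq> Green"
  shows "x \<noteq> y"
  using assms unfolding validP_def has_edge_def by (cases c) auto

lemma adj_Qp:
  assumes "adj P1 P2 P3 x y" "x \<noteq> y"
  shows "Qp n (Sgen P1 P2 P3) x y"
proof -
  obtain c where c: "has_edge P1 P2 P3 c x y" using assms(1) unfolding adj_def by blast
  show ?thesis
  proof (cases c)
    case Blue
    then have "(x, y) \<in> P1 \<or> (y, x) \<in> P1" using c unfolding has_edge_def by simp
    then show ?thesis
    proof
      assume "(x, y) \<in> P1"
      then have "Bmat x y \<in> Sgen P1 P2 P3" unfolding Sgen_def by force
      then show ?thesis unfolding Qp_def Bmat_Fm by (blast intro: lie_gen.base)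
    next
      assume "(y, x) \<in> P1"
      then have "Bmat y x \<in> Sgen P1 P2 P3" unfolding Sgen_def by force
      then have "Fm x y (-1) \<in> lie_gen n (Sgen P1 P2 P3)" unfolding Bmat_Fm Fm_swap1 by (blast intro: lie_gen.base)
      then show ?thesis unfolding Qp_def using lg_Fm_neg1 by blast
    qed
  next
    case Red
    then have "(x, y) \<in> P2 \<or> (y, x) \<in> P2" using c unfolding has_edge_def by simp
    then have "Cmat x y \<in> Sgen P1 P2 P3 \<or> Cmat y x \<in> Sgen P1 P2 P3" unfolding Sgen_def by force
    then show ?thesis unfolding Qp_def Cmat_Fm Fm_swapi by (blast intro: lie_gen.base)
  next
    case Green
    then show ?thesis using c assms(2) unfolding has_edge_def by simp
  qed
qed

lemma Q_all:
  assumes "validP n P1" "validP n P2" "validP n P3" "graph_connected n P1 P2 P3"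
    and "x \<in> {1..n}" "y \<in> {1..n}" "x \<noteq> y"
  shows "Qp n (Sgen P1 P2 P3) x y"
proof (rule star_lemma[where E = "adj P1 P2 P3" and V = "{1..n}"])
  show "\<forall>x\<in>{1..n}. \<forall>y\<in>{1..n}. (adj P1 P2 P3)\<^sup>*\<^sup>* x y" using assms(4) unfolding graph_connected_def by blast
  show "\<And>x y. adj P1 P2 P3 x y \<Longrightarrow> x \<in> {1..n} \<Longrightarrow> y \<in> {1..n}"
    using has_edge_range[OF assms(1-3)] unfolding adj_def by blast
  show "\<And>x y. adj P1 P2 P3 x y \<Longrightarrow> x \<noteq> y \<Longrightarrow> x \<in> {1..n} \<Longrightarrow> y \<in> {1..n} \<Longrightarrow> Qp n (Sgen P1 P2 P3) x y"
    using adj_Qp by blast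
  show "\<And>x y z. Qp n (Sgen P1 P2 P3) x y \<Longrightarrow> Qp n (Sgen P1 P2 P3) y z \<Longrightarrow> x \<in> {1..n} \<Longrightarrow> y \<in> {1..n} \<Longrightarrow> z \<in> {1..n} \<Longrightarrow> x \<noteq> y \<Longrightarrow> y \<noteq> z \<Longrightarrow> x \<noteq> z \<Longrightarrow> Qp n (Sgen P1 P2 P3) x z"
    using Qp_trans by blast
qed (use assms in auto)

lemma B_all:
  assumes "validP n P1" "blue_connected n P1"
    and "x \<in> {1..n}" "y \<in> {1..n}" "x \<noteq> y"
  shows "Fm x y 1 \<in> lie_gen n (Sgen P1 P2 P3)"
proof (rule star_lemma[where E = "has_edge P1 {} {} Blue" and V = "{1..n}" and R = "\<lambda>x y. Fm x y 1 \<in> lie_gen n (Sgen P1 P2 P3)"])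
  show "\<forall>x\<in>{1..n}. \<forall>y\<in>{1..n}. (has_edge P1 {} {} Blue)\<^sup>*\<^sup>* x y" using assms(2) unfolding blue_connected_def by blast
  show "\<And>x y. has_edge P1 {} {} Blue x y \<Longrightarrow> x \<in> {1..n} \<Longrightarrow> y \<in> {1..n}"
    using assms(1) unfolding validP_def has_edge_def by auto
  show "\<And>x y. has_edge P1 {} {} Blue x y \<Longrightarrow> x \<noteq> y \<Longrightarrow> x \<in> {1..n} \<Longrightarrow> y \<in> {1..n} \<Longrightarrow> Fm x y 1 \<in> lie_gen n (Sgen P1 P2 P3)"
  proof -
    fix x y assume "has_edge P1 {} {} Blue x y"
    then have "(x, y) \<in> P1 \<or> (y, x) \<in> P1" unfolding has_edge_def by simp
    then have "Fm x y 1 \<in> lie_gen n (Sgen P1 P2 P3) \<or> Fm x y (-1) \<in> lie_gen n (Sgen P1 P2 P3)"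
      unfolding Sgen_def Bmat_Fm[symmetric] Fm_swap1[symmetric] by (force intro: lie_gen.base)
    then show "Fm x y 1 \<in> lie_gen n (Sgen P1 P2 P3)" using lg_Fm_neg1 by blast
  qed
  show "\<And>x y z. Fm x y 1 \<in> lie_gen n (Sgen P1 P2 P3) \<Longrightarrow> Fm y z 1 \<in> lie_gen n (Sgen P1 P2 P3) \<Longrightarrow> x \<in> {1..n} \<Longrightarrow> y \<in> {1..n} \<Longrightarrow> z \<in> {1..n} \<Longrightarrow> x \<noteq> y \<Longrightarrow> y \<noteq> z \<Longrightarrow> x \<noteq> z \<Longrightarrow> Fm x z 1 \<in> lie_gen n (Sgen P1 P2 P3)"
    using brk_Fm[where z=1 and u=1] by fastforce
qed (use assms in auto)



lemma all_full:
  assumes Q: "\<And>x y. x \<in> {1..n} \<Longrightarrow> y \<in> {1..n} \<Longrightarrow> x \<noteq> y \<Longrightarrow> Qp n S x y"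
    and ab: "a \<in> {1..n}" "b \<in> {1..n}" "a \<noteq> b" "full n S a b"
    and xy: "x \<in> {1..n}" "y \<in> {1..n}" "x \<noteq> y"
  shows "full n S x y"
proof -
  have fa: "full n S a z" if "z \<in> {1..n}" "z \<noteq> a" for z
  proof (cases "z = b")
    case True then show ?thesis using ab by simp
  next
    case False then show ?thesis using full_A[OF ab(1,2) that(1) ab(3) _ _ ab(4) Q[OF ab(2) that(1)]] that by auto
  qed
  have fb: "full n S b z" if "z \<in> {1..n}" "z \<noteq> b" for z
  proof (cases "z = a")
    case True then show ?thesis using ab full_sym by simp
  next
    case False then show ?thesis using full_A[OF ab(2,1) that(1) _ _ _ full_sym[OF ab(4)] Q[OF ab(1) that(1)]] that ab by auto
  qed
  show ?thesis
  proof (cases "x = a")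
    case True then show ?thesis using fa xy by simp
  next
    case xa: False
    show ?thesis
    proof (cases "y = a")
      case True then show ?thesis using fa[of x] xy xa full_sym by simp
    next
      case ya: False
      show ?thesis using full_trans[OF xy(1) ab(1) xy(2) _ _ xy(3) full_sym[OF fa[OF xy(1) xa]] fa[OF xy(2) ya]] xa ya by auto
    qed
  qed
qed

lemma im_diag:
  assumes "X \<in> su n" shows "X a a = \<i> * complex_of_real (Im (X a a))"
proof -
  have h: "X a a = - cnj (X a a)" using assms unfolding su_def by blast
  have "Re (X a a) = Re (- cnj (X a a))" using h by (rule arg_cong)
  then have "Re (X a a) = 0" by simp
  then show ?thesis by (simp add: complex_eq_iff)
qed

lemma sum_if_cond: "(\<Sum>a\<in>A. if C then f a else (0::complex)) = (if C then (\<Sum>a\<in>A. f a) else 0)"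
  by (cases C) simp_all

lemma su_sub:
  assumes F: "\<And>x y. x \<in> {1..n} \<Longrightarrow> y \<in> {1..n} \<Longrightarrow> x \<noteq> y \<Longrightarrow> full n S x y"
    and X: "X \<in> su n" and n1: "n \<ge> 1"
  shows "X \<in> lie_gen n S"
proof -
  define I1 where "I1 = {(a, b). 1 \<le> a \<and> a < b \<and> b \<le> n}"
  have fin: "finite I1" unfolding I1_def
    by (rule finite_subset[of _ "{1..n} \<times> {1..n}"]) auto
  have X0: "\<And>a b. a \<notin> {1..n} \<or> b \<notin> {1..n} \<Longrightarrow> X a b = 0" and hX: "\<And>a b. X b a = - cnj (X a b)"
    and tr: "(\<Sum>a\<in>{1..n}. X a a) = 0"
    using X unfolding su_def by blast+
  define T1 where "T1 = (\<lambda>x y. \<Sum>p\<in>I1. Fm (fst p) (snd p) (X (fst p) (snd p)) x y)"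
  define T2 where "T2 = (\<lambda>x y. \<Sum>a\<in>{1..<n}. complex_of_real (Im (X a a)) * Dmat a n x y)"
  have T1L: "T1 \<in> lie_gen n S" unfolding T1_def
  proof (rule lg_sum[OF fin], intro ballI)
    fix p assume "p \<in> I1"
    then have "full n S (fst p) (snd p)" using F unfolding I1_def by auto
    then show "Fm (fst p) (snd p) (X (fst p) (snd p)) \<in> lie_gen n S" unfolding full_def using lg_Fm_full by blast
  qed
  have T2L: "T2 \<in> lie_gen n S" unfolding T2_def
  proof (rule lg_sum, simp, intro ballI)
    fix a assume a: "a \<in> {1..<n}"
    then have ra: "a \<in> {1..n}" "n \<in> {1..n}" "a \<noteq> n" by auto
    then have "full n S a n" using F by blast
    then have "(\<lambda>x y. 2 * Dmat a n x y) \<in> lie_gen n S" unfolding full_def using lie_gen.brk br3[OF ra] by metis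
    from lie_gen.smult[OF this, of "1/2"] have D: "Dmat a n \<in> lie_gen n S" by simp
    show "(\<lambda>x y. complex_of_real (Im (X a a)) * Dmat a n x y) \<in> lie_gen n S"
      using lie_gen.smult[OF D] .
  qed
  have eq: "X x y = T1 x y + T2 x y" for x y
  proof -
    have t1: "T1 x y = (if (x, y) \<in> I1 then X x y else 0) + (if (y, x) \<in> I1 then - cnj (X y x) else 0)"
    proof -
      have pt: "Fm (fst p) (snd p) (X (fst p) (snd p)) x y = (if p = (x, y) then X x y else 0) + (if p = (y, x) then - cnj (X y x) else 0)"
        if "p \<in> I1" for p
      proof -
        obtain a b where p: "p = (a, b)" by (cases p)
        have ab: "a \<noteq> b" using that p unfolding I1_def by auto
        show ?thesis unfolding p Fm_def using ab
          by (cases "x = a"; cases "y = b"; cases "x = b"; cases "y = a") simp_all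
      qed
      have "T1 x y = (\<Sum>p\<in>I1. (if p = (x, y) then X x y else 0)) + (\<Sum>p\<in>I1. (if p = (y, x) then - cnj (X y x) else 0))"
        unfolding T1_def sum.distrib[symmetric] by (rule sum.cong) (use pt in simp_all)
      then show ?thesis by (simp add: fin)
    qed
    have t2: "T2 x y = (if x = y \<and> x \<in> {1..<n} then \<i> * complex_of_real (Im (X x x)) else 0)
        - (if x = n \<and> y = n then \<i> * (\<Sum>a\<in>{1..<n}. complex_of_real (Im (X a a))) else 0)"
    proof -
      have pt: "complex_of_real (Im (X a a)) * Dmat a n x y = (if a = x then (if x = y then \<i> * complex_of_real (Im (X a a)) else 0) else 0)
          - (if x = n \<and> y = n then \<i> * complex_of_real (Im (X a a)) else 0)" if "a \<in> {1..<n}" for a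
      proof -
        have "a \<noteq> n" using that by simp
        then show ?thesis unfolding Dmat_def Emat_def
          by (cases "x = a"; cases "y = a"; cases "x = n"; cases "y = n") (simp_all add: algebra_simps)
      qed
      have "T2 x y = (\<Sum>a\<in>{1..<n}. (if a = x then (if x = y then \<i> * complex_of_real (Im (X a a)) else 0) else 0))
          - (\<Sum>a\<in>{1..<n}. (if x = n \<and> y = n then \<i> * complex_of_real (Im (X a a)) else 0))"
        unfolding T2_def sum_subtractf[symmetric] by (rule sum.cong) (use pt in simp_all)
      also have "(\<Sum>a\<in>{1..<n}. (if a = x then (if x = y then \<i> * complex_of_real (Im (X a a)) else 0) else 0))
          = (if x = y \<and> x \<in> {1..<n} then \<i> * complex_of_real (Im (X x x)) else 0)"
        by (cases "x = y") (simp_all add: sum.delta)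
      also have "(\<Sum>a\<in>{1..<n}. (if x = n \<and> y = n then \<i> * complex_of_real (Im (X a a)) else 0))
          = (if x = n \<and> y = n then \<i> * (\<Sum>a\<in>{1..<n}. complex_of_real (Im (X a a))) else 0)"
        unfolding sum_if_cond by (simp add: sum_distrib_left)
      finally show ?thesis .
    qed
    show ?thesis
    proof (cases "x \<in> {1..n} \<and> y \<in> {1..n}")
      case False
      have c: "(x, y) \<notin> I1" "(y, x) \<notin> I1" "\<not> (x = y \<and> x \<in> {1..<n})" "\<not> (x = n \<and> y = n)"
        using False n1 unfolding I1_def by auto
      have "X x y = 0" using X0 False by blast
      then show ?thesis unfolding t1 t2 by (simp only: c if_True if_False) simp
    next
      case rng: True
      show ?thesis
      proof (cases "x < y")
        case True
        have c: "(x, y) \<in> I1" "(y, x) \<notin> I1" "\<not> (x = y \<and> x \<in> {1..<n})" "\<not> (x = n \<and> y = n)"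
          using True rng unfolding I1_def by auto
        show ?thesis unfolding t1 t2 by (simp only: c if_True if_False) simp
      next
        case nxy: False
        show ?thesis
        proof (cases "y < x")
          case True
          have c: "(x, y) \<notin> I1" "(y, x) \<in> I1" "\<not> (x = y \<and> x \<in> {1..<n})" "\<not> (x = n \<and> y = n)"
            using True rng unfolding I1_def by auto
          show ?thesis unfolding t1 t2 by (simp only: c if_True if_False) (simp add: hX[of y x])
        next
          case False
          then have xy: "x = y" using nxy by auto
          have c: "(x, y) \<notin> I1" "(y, x) \<notin> I1" using xy unfolding I1_def by auto
          show ?thesis
          proof (cases "x = n")
            case False
            have c2: "(x = y \<and> x \<in> {1..<n}) = True" "(x = n \<and> y = n) = False" using False rng xy by auto
            have "T1 x y + T2 x y = \<i> * complex_of_real (Im (X x x))" unfolding t1 t2 by (simp only: c c2 if_True if_False) simp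
            then show ?thesis using im_diag[OF X, of x] xy by simp
          next
            case True
            have c2: "(x = y \<and> x \<in> {1..<n}) = False" "(x = n \<and> y = n) = True" using True xy by auto
            have "{1..n} = insert n {1..<n}" using n1 by auto
            then have s1: "X n n + (\<Sum>a\<in>{1..<n}. X a a) = 0" using tr by simp
            have s2: "(\<Sum>a\<in>{1..<n}. X a a) = \<i> * (\<Sum>a\<in>{1..<n}. complex_of_real (Im (X a a)))"
              unfolding sum_distrib_left by (rule sum.cong) (simp, rule im_diag[OF X])
            have "T1 x y + T2 x y = - (\<i> * (\<Sum>a\<in>{1..<n}. complex_of_real (Im (X a a))))"
              unfolding t1 t2 by (simp only: c c2 if_True if_False) simp
            also have "\<dots> = X n n"
            proof -
              have h: "X n n + \<i> * (\<Sum>a\<in>{1..<n}. complex_of_real (Im (X a a))) = 0" using s1 s2 by simp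
              have "X n n = - (\<i> * (\<Sum>a\<in>{1..<n}. complex_of_real (Im (X a a))))"
                by (subst eq_neg_iff_add_eq_0) (rule h)
              then show ?thesis by simp
            qed
            finally show ?thesis using True xy by simp
          qed
        qed
      qed
    qed
  qed
  have "X = (\<lambda>x y. T1 x y + T2 x y)" using eq by blast
  then show ?thesis using lie_gen.add[OF T1L T2L] by simp
qed

lemma suff:
  assumes v: "validP n P1" "validP n P2" "validP n P3"
    and c: "graph_connected n P1 P2 P3"
    and ab: "a \<in> {1..n}" "b \<in> {1..n}" "a \<noteq> b" "full n (Sgen P1 P2 P3) a b"
  shows "lie_gen n (Sgen P1 P2 P3) = su n"
proof
  have "Sgen P1 P2 P3 \<subseteq> su n"
    using v unfolding Sgen_def validP_def Bmat_Fm Cmat_Fm by (auto intro!: Fm_su Dmat_su)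
  then show "lie_gen n (Sgen P1 P2 P3) \<subseteq> su n" by (rule lg_su)
  show "su n \<subseteq> lie_gen n (Sgen P1 P2 P3)"
    using su_sub all_full[OF Q_all[OF v c] ab] ab(1) by auto
qed



fun chain :: "(nat \<times> nat) set \<Rightarrow> (nat \<times> nat) set \<Rightarrow> (nat \<times> nat) set \<Rightarrow> nat \<Rightarrow> (nat \<times> color \<times> nat) list \<Rightarrow> nat \<Rightarrow> bool" where
  "chain P1 P2 P3 x [] y = (x = y)"
| "chain P1 P2 P3 x (s # w) y = (fst s = x \<and> has_edge P1 P2 P3 (fst (snd s)) x (snd (snd s)) \<and> chain P1 P2 P3 (snd (snd s)) w y)"

lemma chain_append: "chain P1 P2 P3 x (w1 @ w2) z = (\<exists>y. chain P1 P2 P3 x w1 y \<and> chain P1 P2 P3 y w2 z)"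
  by (induction w1 arbitrary: x) auto

lemma red_count_Nil[simp]: "red_count [] = 0"
  and red_count_Cons[simp]: "red_count (s # w) = (if fst (snd s) = Red then 1 else 0) + red_count w"
  and red_count_append[simp]: "red_count (w1 @ w2) = red_count w1 + red_count w2"
  by (simp_all add: red_count_def)

definition flipS :: "nat \<times> color \<times> nat \<Rightarrow> nat \<times> color \<times> nat" where
  "flipS s = (snd (snd s), fst (snd s), fst s)"

lemma chain_rev: "chain P1 P2 P3 x w y \<Longrightarrow> chain P1 P2 P3 y (rev (map flipS w)) x"
proof (induction w arbitrary: x)
  case Nil then show ?case by simp
next
  case (Cons s w)
  then have "chain P1 P2 P3 y (rev (map flipS w)) (snd (snd s))" by simp
  moreover have "chain P1 P2 P3 (snd (snd s)) [flipS s] x"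
    using Cons.prems has_edge_sym by (simp add: flipS_def)
  ultimately show ?case by (auto simp: chain_append)
qed

lemma red_count_rev: "red_count (rev (map flipS w)) = red_count w"
  by (induction w) (auto simp: flipS_def)

lemma cw_chain:
  "w \<noteq> [] \<Longrightarrow> (\<forall>s\<in>set w. case s of (u, c, v) \<Rightarrow> has_edge P1 P2 P3 c u v) \<Longrightarrow>
   (\<forall>k. Suc k < length w \<longrightarrow> snd (snd (w ! k)) = fst (w ! Suc k)) \<Longrightarrow>
   chain P1 P2 P3 (fst (hd w)) w (snd (snd (last w)))"
proof (induction w)
  case Nil then show ?case by simp
next
  case (Cons s w)
  show ?case
  proof (cases "w = []")
    case True
    then show ?thesis using Cons.prems by (cases s) auto
  next
    case False
    have idx: "\<forall>k. Suc k < length w \<longrightarrow> snd (snd (w ! k)) = fst (w ! Suc k)"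
      using Cons.prems(3) by (metis Suc_less_eq length_Cons nth_Cons_Suc)
    have "snd (snd s) = fst (hd w)" using Cons.prems(3) False
      by (metis hd_conv_nth length_Cons length_greater_0_conv nth_Cons_0 nth_Cons_Suc zero_less_Suc Suc_less_eq)
    then show ?thesis using Cons.IH[OF False _ idx] Cons.prems(2) False by (cases s) auto
  qed
qed

lemma chain_hd: "chain P1 P2 P3 x w y \<Longrightarrow> w \<noteq> [] \<Longrightarrow> fst (hd w) = x"
  by (cases w) auto

lemma chain_last: "chain P1 P2 P3 x w y \<Longrightarrow> w \<noteq> [] \<Longrightarrow> snd (snd (last w)) = y"
  by (induction w arbitrary: x) auto

lemma chain_edges: "chain P1 P2 P3 x w y \<Longrightarrow> \<forall>s\<in>set w. case s of (u, c, v) \<Rightarrow> has_edge P1 P2 P3 c u v"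
proof (induction w arbitrary: x)
  case Nil then show ?case by simp
next
  case (Cons s w)
  then have h: "chain P1 P2 P3 (snd (snd s)) w y" by simp
  have "case s of (u, c, v) \<Rightarrow> has_edge P1 P2 P3 c u v" using Cons.prems by (cases s) auto
  then show ?case using Cons.IH[OF h] by simp
qed

lemma chain_idx: "chain P1 P2 P3 x w y \<Longrightarrow> \<forall>k. Suc k < length w \<longrightarrow> snd (snd (w ! k)) = fst (w ! Suc k)"
proof (induction w arbitrary: x)
  case Nil then show ?case by simp
next
  case (Cons s w)
  show ?case
  proof (intro allI impI)
    fix k assume k: "Suc k < length (s # w)"
    show "snd (snd ((s # w) ! k)) = fst ((s # w) ! Suc k)"
    proof (cases k)
      case 0
      then show ?thesis using Cons.prems k by (cases w) auto
    next
      case (Suc k')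
      then show ?thesis using Cons.IH[of "snd (snd s)"] Cons.prems k by auto
    qed
  qed
qed

lemma chain_cw: "chain P1 P2 P3 x w x \<Longrightarrow> w \<noteq> [] \<Longrightarrow> closed_walk P1 P2 P3 w"
  unfolding closed_walk_def using chain_hd chain_last chain_edges chain_idx by metis

lemma cw_chain': "closed_walk P1 P2 P3 w \<Longrightarrow> chain P1 P2 P3 (fst (hd w)) w (fst (hd w))"
  unfolding closed_walk_def using cw_chain by metis

lemma chain_range: "validP n P1 \<Longrightarrow> validP n P2 \<Longrightarrow> validP n P3 \<Longrightarrow> chain P1 P2 P3 x w y \<Longrightarrow> x \<in> {1..n} \<Longrightarrow> y \<in> {1..n}"
  by (induction w arbitrary: x) (auto dest: has_edge_range)

lemma conn_chain:
  assumes "(adj P1 P2 P3)\<^sup>*\<^sup>* x y" shows "\<exists>w. chain P1 P2 P3 x w y"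
  using assms
proof (induction rule: rtranclp_induct)
  case base
  then show ?case using chain.simps(1) by blast
next
  case (step y z)
  then obtain w c where "chain P1 P2 P3 x w y" "has_edge P1 P2 P3 c y z" unfolding adj_def by blast
  then have "chain P1 P2 P3 x (w @ [(y, c, z)]) z" by (auto simp: chain_append)
  then show ?case by blast
qed

lemma blue_edge_F:
  assumes "has_edge P1 P2 P3 Blue x y"
  shows "Fm x y 1 \<in> lie_gen n (Sgen P1 P2 P3)"
proof -
  have "(x, y) \<in> P1 \<or> (y, x) \<in> P1" using assms unfolding has_edge_def by simp
  then have "Fm x y 1 \<in> lie_gen n (Sgen P1 P2 P3) \<or> Fm x y (-1) \<in> lie_gen n (Sgen P1 P2 P3)"
    unfolding Sgen_def Bmat_Fm[symmetric] Fm_swap1[symmetric] by (force intro: lie_gen.base)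
  then show ?thesis using lg_Fm_neg1 by blast
qed

lemma red_edge_F:
  assumes "has_edge P1 P2 P3 Red x y"
  shows "Fm x y \<i> \<in> lie_gen n (Sgen P1 P2 P3)"
proof -
  have "(x, y) \<in> P2 \<or> (y, x) \<in> P2" using assms unfolding has_edge_def by simp
  then show ?thesis
  proof
    assume "(x, y) \<in> P2"
    then have "Cmat x y \<in> Sgen P1 P2 P3" unfolding Sgen_def by force
    then show ?thesis unfolding Cmat_Fm by (rule lie_gen.base)
  next
    assume "(y, x) \<in> P2"
    then have "Cmat y x \<in> Sgen P1 P2 P3" unfolding Sgen_def by force
    then have "Fm y x \<i> \<in> lie_gen n (Sgen P1 P2 P3)" unfolding Cmat_Fm by (rule lie_gen.base)
    then show ?thesis unfolding Fm_swapi[of y x] .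
  qed
qed

lemma odd_full:
  assumes v: "validP n P1" "validP n P2" "validP n P3"
    and c: "graph_connected n P1 P2 P3"
    and w: "closed_walk P1 P2 P3 w" "odd (red_count w)"
  shows "\<exists>a b. a \<in> {1..n} \<and> b \<in> {1..n} \<and> a \<noteq> b \<and> full n (Sgen P1 P2 P3) a b"
proof (rule ccontr)
  let ?L = "lie_gen n (Sgen P1 P2 P3)"
  assume "\<not> ?thesis"
  then have nf: "\<And>a b. a \<in> {1..n} \<Longrightarrow> b \<in> {1..n} \<Longrightarrow> a \<noteq> b \<Longrightarrow> \<not> full n (Sgen P1 P2 P3) a b" by blast
  define \<sigma> where "\<sigma> x y = (x \<noteq> y \<and> Fm x y \<i> \<in> ?L)" for x y
  have key: "Fm x y 1 \<in> ?L \<longleftrightarrow> \<not> \<sigma> x y" if "x \<in> {1..n}" "y \<in> {1..n}" "x \<noteq> y" for x y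
    using nf[OF that] Q_all[OF v c that] that unfolding \<sigma>_def full_def Qp_def by blast
  have Fa: "Fm x y (if \<sigma> x y then \<i> else 1) \<in> ?L" if "x \<in> {1..n}" "y \<in> {1..n}" "x \<noteq> y" for x y
    using key[OF that] that unfolding \<sigma>_def by auto
  have coc: "\<sigma> x z = (\<sigma> x y \<noteq> \<sigma> y z)" if r: "x \<in> {1..n}" "y \<in> {1..n}" "z \<in> {1..n}" for x y z
  proof (cases "x = y \<or> y = z")
    case True
    then show ?thesis unfolding \<sigma>_def by auto
  next
    case False
    show ?thesis
    proof (cases "x = z")
      case True
      then show ?thesis unfolding \<sigma>_def using Fm_swapi[of x y] by auto
    next
      case xz: False
      have b: "Fm x z ((if \<sigma> x y then \<i> else 1) * (if \<sigma> y z then \<i> else 1)) \<in> ?L"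
        using brk_Fm[OF r _ _ xz Fa Fa] False r by auto
      show ?thesis
      proof (cases "\<sigma> x y"; cases "\<sigma> y z")
        assume "\<sigma> x y" "\<sigma> y z"
        then have "Fm x z (-1) \<in> ?L" using b by simp
        then show ?thesis using key[OF r(1,3) xz] lg_Fm_neg1 \<open>\<sigma> x y\<close> \<open>\<sigma> y z\<close> by blast
      next
        assume h: "\<sigma> x y" "\<not> \<sigma> y z"
        then have "Fm x z \<i> \<in> ?L" using b by simp
        then have "\<sigma> x z" using xz unfolding \<sigma>_def by simp
        then show ?thesis using h by simp
      next
        assume h: "\<not> \<sigma> x y" "\<sigma> y z"
        then have "Fm x z \<i> \<in> ?L" using b by simp
        then have "\<sigma> x z" using xz unfolding \<sigma>_def by simp
        then show ?thesis using h by simp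
      next
        assume "\<not> \<sigma> x y" "\<not> \<sigma> y z"
        then show ?thesis using b key[OF r(1,3) xz] by simp
      qed
    qed
  qed
  have edge: "\<sigma> x y = (c = Red)" if "has_edge P1 P2 P3 c x y" for c x y
  proof -
    have r: "x \<in> {1..n}" "y \<in> {1..n}" using has_edge_range[OF v that] by auto
    show ?thesis
    proof (cases c)
      case Blue
      then have "x \<noteq> y" using has_edge_ne[OF v(1,2) that] by simp
      then show ?thesis using key[OF r] blue_edge_F[of P1 P2 P3 x y n] that Blue by simp
    next
      case Red
      then have "x \<noteq> y" using has_edge_ne[OF v(1,2) that] by simp
      then show ?thesis using red_edge_F[of P1 P2 P3 x y n] that Red unfolding \<sigma>_def by simp
    next
      case Green
      then show ?thesis using that unfolding has_edge_def \<sigma>_def by simp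
    qed
  qed
  have ch: "\<sigma> x y = odd (red_count w)" if "chain P1 P2 P3 x w y" "x \<in> {1..n}" for x w y
    using that
  proof (induction w arbitrary: x)
    case Nil
    then show ?case unfolding \<sigma>_def by simp
  next
    case (Cons s w)
    let ?v = "snd (snd s)"
    have e: "has_edge P1 P2 P3 (fst (snd s)) x ?v" and cw: "chain P1 P2 P3 ?v w y" using Cons.prems by auto
    have rv: "?v \<in> {1..n}" using has_edge_range[OF v e] by auto
    have ry: "y \<in> {1..n}" using chain_range[OF v cw rv] .
    show ?case using coc[OF Cons.prems(2) rv ry] edge[OF e] Cons.IH[OF cw rv] by auto
  qed
  have wc: "chain P1 P2 P3 (fst (hd w)) w (fst (hd w))" using cw_chain'[OF w(1)] .
  have "w \<noteq> []" using w(1) unfolding closed_walk_def by simp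
  then obtain s w' where "w = s # w'" by (cases w) auto
  then have "fst (hd w) \<in> {1..n}" using wc has_edge_range[OF v] by auto
  from ch[OF wc this] w(2) show False unfolding \<sigma>_def by simp
qed



lemma Fm_nz: "Fm i j z x y \<noteq> 0 \<Longrightarrow> (x = i \<and> y = j) \<or> (x = j \<and> y = i)"
  unfolding Fm_def by (auto split: if_splits)

lemma Dmat_nz: "Dmat i j x y \<noteq> 0 \<Longrightarrow> x = y"
  unfolding Dmat_def Emat_def by (auto split: if_splits)

lemma Sgen_cases:
  assumes "X \<in> Sgen P1 P2 P3"
  obtains i j where "(i, j) \<in> P1" "X = Fm i j 1" | i j where "(i, j) \<in> P2" "X = Fm i j \<i>" | i j where "(i, j) \<in> P3" "X = Dmat i j"
  using assms unfolding Sgen_def Bmat_Fm Cmat_Fm by auto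

lemma nec_conn:
  assumes v: "validP n P1" "validP n P2" "validP n P3"
    and L: "lie_gen n (Sgen P1 P2 P3) = su n"
  shows "graph_connected n P1 P2 P3"
proof (rule ccontr)
  assume "\<not> graph_connected n P1 P2 P3"
  then obtain a b where ab: "a \<in> {1..n}" "b \<in> {1..n}" "\<not> (adj P1 P2 P3)\<^sup>*\<^sup>* a b"
    unfolding graph_connected_def by blast
  define K where "K = {x. (adj P1 P2 P3)\<^sup>*\<^sup>* a x}"
  have adjK: "y \<in> K" if "x \<in> K" "adj P1 P2 P3 x y" for x y
    using that unfolding K_def mem_Collect_eq by (rule rtranclp.rtrancl_into_rtrancl)
  have adjs: "adj P1 P2 P3 y x" if "adj P1 P2 P3 x y" for x y
    using that has_edge_sym unfolding adj_def by blast
  have inv: "\<forall>x y. x \<in> K \<longrightarrow> y \<notin> K \<longrightarrow> X x y = 0" if "X \<in> lie_gen n (Sgen P1 P2 P3)" for X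
    using that
  proof (induction rule: lie_gen.induct)
    case (base X)
    show ?case
    proof (intro allI impI)
      fix x y assume xy: "x \<in> K" "y \<notin> K"
      show "X x y = 0"
      proof (rule ccontr)
        assume nz: "X x y \<noteq> 0"
        from base show False
        proof (cases rule: Sgen_cases)
          case (1 i j)
          then have "adj P1 P2 P3 i j" unfolding adj_def has_edge_def by (auto intro: exI[of _ Blue])
          then show False using Fm_nz[of i j 1 x y] nz 1 xy adjK adjs by auto
        next
          case (2 i j)
          then have "adj P1 P2 P3 i j" unfolding adj_def has_edge_def by (auto intro: exI[of _ Red])
          then show False using Fm_nz[of i j \<i> x y] nz 2 xy adjK adjs by auto
        next
          case (3 i j)
          then show False using Dmat_nz[of i j x y] nz xy by auto
        qed
      qed
    qed
  next
    case zero then show ?case by simp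
  next
    case (add X Y) then show ?case by simp
  next
    case (smult X r) then show ?case by simp
  next
    case (brk X Y)
    show ?case
    proof (intro allI impI)
      fix x y assume xy: "x \<in> K" "y \<notin> K"
      have z1: "X x k * Y k y = 0" for k
        using brk.IH xy by (cases "k \<in> K") simp_all
      have z2: "Y x k * X k y = 0" for k
        using brk.IH xy by (cases "k \<in> K") simp_all
      show "lie_bracket n X Y x y = 0" unfolding lie_bracket_def matmul_def z1 z2 by simp
    qed
  qed
  have "a \<noteq> b" using ab by auto
  then have "Fm a b 1 \<in> lie_gen n (Sgen P1 P2 P3)" using L Fm_su ab by blast
  moreover have "a \<in> K" "b \<notin> K" using ab unfolding K_def by auto
  ultimately show False using inv \<open>a \<noteq> b\<close> unfolding Fm_def by fastforce
qed

lemma cnj_Real: "w \<in> \<real> \<Longrightarrow> cnj w \<in> \<real>"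
  by (metis Reals_cnj_iff)

lemma Fm_phase:
  fixes g :: "nat \<Rightarrow> complex"
  assumes h: "cnj (g i) * z * g j \<in> \<real>" and ij: "i \<noteq> j"
  shows "\<forall>x y. cnj (g x) * Fm i j z x y * g y \<in> \<real>"
proof (intro allI)
  fix x y
  show "cnj (g x) * Fm i j z x y * g y \<in> \<real>"
  proof (cases "x = i \<and> y = j")
    case True
    then have "Fm i j z x y = z" using ij unfolding Fm_def by simp
    then show ?thesis using h True by simp
  next
    case F1: False
    show ?thesis
    proof (cases "x = j \<and> y = i")
      case True
      then have "Fm i j z x y = - cnj z" using ij unfolding Fm_def by simp
      have e1: "cnj (cnj (g i) * z * g j) = g i * cnj z * cnj (g j)" by simp
      have "cnj (g x) * Fm i j z x y * g y = cnj (g j) * (- cnj z) * g i" using True \<open>Fm i j z x y = - cnj z\<close> by simp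
      also have "\<dots> = - (g i * cnj z * cnj (g j))" by (simp only: mult.commute mult.left_commute mult_minus_left mult_minus_right)
      finally have A: "cnj (g x) * Fm i j z x y * g y = - cnj (cnj (g i) * z * g j)" unfolding e1 .
      show ?thesis unfolding A by (rule Reals_minus) (rule cnj_Real[OF h])
    next
      case False
      then have "Fm i j z x y = 0" unfolding Fm_def by (simp only: F1 False if_False) simp
      then show ?thesis by simp
    qed
  qed
qed

lemma nec_phase:
  assumes v: "validP n P1" "validP n P2" "validP n P3" and n2: "n \<ge> 2"
    and c: "graph_connected n P1 P2 P3"
    and nl: "\<not> has_self_loop P1 P2 P3"
    and ev: "\<And>w. closed_walk P1 P2 P3 w \<Longrightarrow> even (red_count w)"
  shows "lie_gen n (Sgen P1 P2 P3) \<noteq> su n"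
proof
  assume L: "lie_gen n (Sgen P1 P2 P3) = su n"
  have P3e: "P3 = {}"
  proof (rule ccontr)
    assume "P3 \<noteq> {}"
    then obtain i j where "(i, j) \<in> P3" by auto
    then have "has_edge P1 P2 P3 Green i i" unfolding has_edge_def by auto
    then show False using nl unfolding has_self_loop_def by blast
  qed
  define \<rho> where "\<rho> x = (\<exists>w. chain P1 P2 P3 1 w x \<and> odd (red_count w))" for x
  have r1: "(1::nat) \<in> {1..n}" using n2 by auto
  have ex: "\<exists>w. chain P1 P2 P3 1 w x" if "x \<in> {1..n}" for x
    using conn_chain c r1 that unfolding graph_connected_def by blast
  have uniq: "odd (red_count w1) = odd (red_count w2)" if "chain P1 P2 P3 1 w1 x" "chain P1 P2 P3 1 w2 x" for w1 w2 x
  proof -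
    define W where "W = w1 @ rev (map flipS w2)"
    have cW: "chain P1 P2 P3 1 W 1" unfolding W_def chain_append using that chain_rev by blast
    show ?thesis
    proof (cases "W = []")
      case True
      then show ?thesis unfolding W_def by simp
    next
      case False
      from ev[OF chain_cw[OF cW False]] show ?thesis unfolding W_def by (simp add: red_count_rev)
    qed
  qed
  have \<rho>_eq: "\<rho> x = odd (red_count w)" if "chain P1 P2 P3 1 w x" for w x
    using uniq that unfolding \<rho>_def by blast
  have edge: "\<rho> v = (\<rho> u \<noteq> (c = Red))" if e: "has_edge P1 P2 P3 c u v" for c u v
  proof -
    obtain w where w: "chain P1 P2 P3 1 w u" using ex has_edge_range[OF v e] by blast
    have "chain P1 P2 P3 1 (w @ [(u, c, v)]) v" using w e by (auto simp: chain_append)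
    from \<rho>_eq[OF this] \<rho>_eq[OF w] show ?thesis by auto
  qed
  define g where "g x = (if \<rho> x then \<i> else 1)" for x
  have gg: "cnj (g k) * g k = 1" for k unfolding g_def by simp
  have inv: "\<forall>x y. cnj (g x) * X x y * g y \<in> \<real>" if "X \<in> lie_gen n (Sgen P1 P2 P3)" for X
    using that
  proof (induction rule: lie_gen.induct)
    case (base X)
    from base show ?case
    proof (cases rule: Sgen_cases)
      case (1 i j)
      then have "has_edge P1 P2 P3 Blue i j" unfolding has_edge_def by simp
      then have "\<rho> j = \<rho> i" using edge by fastforce
      then have "g j = g i" unfolding g_def by simp
      then have "cnj (g i) * 1 * g j \<in> \<real>" using gg[of i] by simp
      moreover have "i \<noteq> j" using 1 v(1) unfolding validP_def by auto
      ultimately show ?thesis using 1 Fm_phase by metis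
    next
      case (2 i j)
      then have "has_edge P1 P2 P3 Red i j" unfolding has_edge_def by simp
      then have "\<rho> j = (\<not> \<rho> i)" using edge by fastforce
      then have "cnj (g i) * \<i> * g j \<in> \<real>" unfolding g_def by (cases "\<rho> i") simp_all
      moreover have "i \<noteq> j" using 2 v(2) unfolding validP_def by auto
      ultimately show ?thesis using 2 Fm_phase by metis
    next
      case (3 i j)
      then show ?thesis using P3e by simp
    qed
  next
    case zero then show ?case by simp
  next
    case (add X Y) then show ?case by (simp add: distrib_left distrib_right)
  next
    case (smult X r)
    show ?case
    proof (intro allI)
      fix x y
      have "cnj (g x) * (complex_of_real r * X x y) * g y = complex_of_real r * (cnj (g x) * X x y * g y)"
        by (simp add: algebra_simps)
      then show "cnj (g x) * (complex_of_real r * X x y) * g y \<in> \<real>"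
        using smult.IH Reals_mult[OF Reals_of_real] by metis
    qed
  next
    case (brk X Y)
    show ?case
    proof (intro allI)
      fix x y
      have e: "cnj (g x) * (A x k * B k y) * g y = (cnj (g x) * A x k * g k) * (cnj (g k) * B k y * g y)" for A B :: cmat and k
      proof -
        have "(cnj (g x) * A x k * g k) * (cnj (g k) * B k y * g y) = cnj (g x) * A x k * (cnj (g k) * g k) * B k y * g y"
          by (simp add: algebra_simps)
        then show ?thesis using gg[of k] by simp
      qed
      have "cnj (g x) * lie_bracket n X Y x y * g y =
          (\<Sum>k\<in>{1..n}. (cnj (g x) * X x k * g k) * (cnj (g k) * Y k y * g y))
        - (\<Sum>k\<in>{1..n}. (cnj (g x) * Y x k * g k) * (cnj (g k) * X k y * g y))"
        unfolding lie_bracket_def matmul_def right_diff_distrib left_diff_distrib sum_distrib_left sum_distrib_right e ..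
      also have "\<dots> \<in> \<real>"
      proof -
        have p1: "(cnj (g x) * X x k * g k) * (cnj (g k) * Y k y * g y) \<in> \<real>" for k
          by (rule Reals_mult) (use brk.IH in blast)+
        have p2: "(cnj (g x) * Y x k * g k) * (cnj (g k) * X k y * g y) \<in> \<real>" for k
          by (rule Reals_mult) (use brk.IH in blast)+
        show ?thesis by (intro Reals_diff sum_in_Reals p1 p2)
      qed
      finally show "cnj (g x) * lie_bracket n X Y x y * g y \<in> \<real>" .
    qed
  qed
  have "Dmat 1 2 \<in> lie_gen n (Sgen P1 P2 P3)" using L Dmat_su n2 by auto
  from inv[OF this, rule_format, of 1 1] have "cnj (g 1) * \<i> * g 1 \<in> \<real>"
    by (simp add: Dmat_def Emat_def)
  moreover have "cnj (g 1) * \<i> * g 1 = \<i>" unfolding g_def by simp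
  ultimately show False using i_not_in_Reals by metis
qed

lemma green_full:
  assumes v: "validP n P3" and ij: "(i, j) \<in> P3" and Q: "Qp n (Sgen P1 P2 P3) i j"
  shows "full n (Sgen P1 P2 P3) i j"
proof -
  let ?L = "lie_gen n (Sgen P1 P2 P3)"
  have r: "i \<in> {1..n}" "j \<in> {1..n}" "i \<noteq> j" using v ij unfolding validP_def by auto
  have D: "Dmat i j \<in> ?L" using ij unfolding Sgen_def by (force intro: lie_gen.base)
  have b: "Fm i j (2 * \<i> * z) \<in> ?L" if "Fm i j z \<in> ?L" for z
    using lie_gen.brk[OF D that] br2[OF r] by simp
  from Q show ?thesis unfolding Qp_def full_def
  proof
    assume h: "Fm i j 1 \<in> ?L"
    have "Fm i j (complex_of_real (1/2) * (2 * \<i> * 1)) \<in> ?L" by (rule lg_Fm_scale[OF b[OF h]])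
    then show "Fm i j 1 \<in> ?L \<and> Fm i j \<i> \<in> ?L" using h by simp
  next
    assume h: "Fm i j \<i> \<in> ?L"
    have "Fm i j (complex_of_real (-1/2) * (2 * \<i> * \<i>)) \<in> ?L" by (rule lg_Fm_scale[OF b[OF h]])
    then show "Fm i j 1 \<in> ?L \<and> Fm i j \<i> \<in> ?L" using h by simp
  qed
qed

theorem proposition1:
  fixes n :: nat and P1 P2 P3 :: "(nat \<times> nat) set"
  assumes "n \<ge> 2"
    and "P1 \<subseteq> {(i, j). 1 \<le> i \<and> i < j \<and> j \<le> n}"
    and "P2 \<subseteq> {(i, j). 1 \<le> i \<and> i < j \<and> j \<le> n}"
    and "P3 \<subseteq> {(i, j). 1 \<le> i \<and> i < j \<and> j \<le> n}"
  shows "lie_gen n ((\<lambda>(i, j). Bmat i j) ` P1 \<union> (\<lambda>(i, j). Cmat i j) ` P2 \<union> (\<lambda>(i, j). Dmat i j) ` P3) = su n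
    \<longleftrightarrow>
      ((\<exists>c1 c2. c1 \<noteq> c2 \<and> color_used P1 P2 P3 c1 \<and> color_used P1 P2 P3 c2) \<and> blue_connected n P1)
    \<or> (graph_connected n P1 P2 P3 \<and> has_self_loop P1 P2 P3)
    \<or> (graph_connected n P1 P2 P3 \<and> (\<exists>w. closed_walk P1 P2 P3 w \<and> odd (red_count w)))"
proof -
  have v: "validP n P1" "validP n P2" "validP n P3" using assms(2-4) unfolding validP_def by auto
  have Seq: "(\<lambda>(i, j). Bmat i j) ` P1 \<union> (\<lambda>(i, j). Cmat i j) ` P2 \<union> (\<lambda>(i, j). Dmat i j) ` P3 = Sgen P1 P2 P3"
    unfolding Sgen_def ..
  let ?L = "lie_gen n (Sgen P1 P2 P3)"
  have self_full: "\<exists>a b. a \<in> {1..n} \<and> b \<in> {1..n} \<and> a \<noteq> b \<and> full n (Sgen P1 P2 P3) a b"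
    if c: "graph_connected n P1 P2 P3" and sl: "has_self_loop P1 P2 P3"
  proof -
    obtain col u where e: "has_edge P1 P2 P3 col u u" using sl unfolding has_self_loop_def by blast
    then have "col = Green" using has_edge_ne[OF v(1,2) e] by blast
    then obtain i j where ij: "(i, j) \<in> P3" using e unfolding has_edge_def by auto
    have r: "i \<in> {1..n}" "j \<in> {1..n}" "i \<noteq> j" using v(3) ij unfolding validP_def by auto
    show ?thesis using green_full[OF v(3) ij Q_all[OF v c r]] r by blast
  qed
  show ?thesis
    unfolding Seq
  proof
    assume L: "?L = su n"
    have c: "graph_connected n P1 P2 P3" using nec_conn[OF v L] .
    show "((\<exists>c1 c2. c1 \<noteq> c2 \<and> color_used P1 P2 P3 c1 \<and> color_used P1 P2 P3 c2) \<and> blue_connected n P1)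
    \<or> (graph_connected n P1 P2 P3 \<and> has_self_loop P1 P2 P3)
    \<or> (graph_connected n P1 P2 P3 \<and> (\<exists>w. closed_walk P1 P2 P3 w \<and> odd (red_count w)))"
      using nec_phase[OF v assms(1) c] L c by blast
  next
    assume H: "((\<exists>c1 c2. c1 \<noteq> c2 \<and> color_used P1 P2 P3 c1 \<and> color_used P1 P2 P3 c2) \<and> blue_connected n P1)
    \<or> (graph_connected n P1 P2 P3 \<and> has_self_loop P1 P2 P3)
    \<or> (graph_connected n P1 P2 P3 \<and> (\<exists>w. closed_walk P1 P2 P3 w \<and> odd (red_count w)))"
    then show "?L = su n"
    proof (elim disjE conjE exE)
      fix c1 c2 assume cc: "c1 \<noteq> c2" "color_used P1 P2 P3 c1" "color_used P1 P2 P3 c2" and bc: "blue_connected n P1"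
      have c: "graph_connected n P1 P2 P3"
      proof -
        have "has_edge P1 {} {} Blue x y \<Longrightarrow> adj P1 P2 P3 x y" for x y
          unfolding adj_def has_edge_def by (auto intro: exI[of _ Blue])
        then have "(has_edge P1 {} {} Blue)\<^sup>*\<^sup>* x y \<Longrightarrow> (adj P1 P2 P3)\<^sup>*\<^sup>* x y" for x y
          by (metis mono_rtranclp)
        then show ?thesis using bc unfolding blue_connected_def graph_connected_def by blast
      qed
      obtain col where col: "col \<noteq> Blue" "color_used P1 P2 P3 col"
      proof (cases "c1 = Blue")
        case True then show ?thesis using that cc by metis
      next
        case False then show ?thesis using that cc by metis
      qed
      then obtain u v where e: "has_edge P1 P2 P3 col u v" unfolding color_used_def by blast
      show ?thesis
      proof (cases col)
        case Blue then show ?thesis using col by simp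
      next
        case Red
        have r: "u \<in> {1..n}" "v \<in> {1..n}" "u \<noteq> v"
          using has_edge_range[OF v e] has_edge_ne[OF v(1,2) e] Red by auto
        have "full n (Sgen P1 P2 P3) u v" unfolding full_def
          using B_all[OF v(1) bc r] red_edge_F[of P1 P2 P3 u v n] e Red by simp
        then show ?thesis using suff[OF v c r] by blast
      next
        case Green
        then obtain i j where ij: "(i, j) \<in> P3" using e unfolding has_edge_def by auto
        have r: "i \<in> {1..n}" "j \<in> {1..n}" "i \<noteq> j" using v(3) ij unfolding validP_def by auto
        have "Qp n (Sgen P1 P2 P3) i j" unfolding Qp_def using B_all[OF v(1) bc r] by blast
        then show ?thesis using green_full[OF v(3) ij] suff[OF v c r] by blast
      qed
    next
      assume c: "graph_connected n P1 P2 P3" and sl: "has_self_loop P1 P2 P3"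
      then show ?thesis using self_full[OF c sl] suff[OF v c] by blast
    next
      fix w assume c: "graph_connected n P1 P2 P3" and w: "closed_walk P1 P2 P3 w" "odd (red_count w)"
      then show ?thesis using odd_full[OF v c w] suff[OF v c] by blast
    qed
  qed
qed

end
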